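(* Let $G$ be a graph, $k \ge \gamma(G)$ an integer, and let $A$ and $B$ be dominating sets of $G$ with $|A| = |B| = k$. Then $A$ and $B$ are joined by a path in $D_{k+1}(G)$ if and only if $A$ and $B$ are joined by a path in $X_k(G)$.
   Context: All graphs are finite and simple. A set $S \subseteq V(G)$ is a dominating set of $G$ if every vertex of $V(G)\setminus S$ is adjacent to a vertex of $S$. $\gamma(G)$ is the minimum cardinality of a dominating set of $G$. For an integer $k \ge \gamma(G)$, the $k$-dominating graph $D_k(G)$ is the graph whose vertices are the dominating sets of $G$ of cardinality at most $k$, with two such sets $A,B$ adjacent if and only if their symmetric difference $(A\setminus B)\cup(B\setminus A)$ consists of exactly one vertex of $G$. $X_k(G)$ is the graph whose vertices are the dominating sets of $G$ of cardinality exactly $k$, with two such sets $S,T$ adjacent if and only if there exist $s \in S$ and $t \in T$ with $T = (S\setminus\{s\})\cup\{t\}$ (and $S \neq T$). *)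

theory Defs
  imports Main
begin

definition simple_graph :: "'a set \<Rightarrow> ('a \<Rightarrow> 'a \<Rightarrow> bool) \<Rightarrow> bool" where
  "simple_graph V E \<longleftrightarrow> finite V \<and> (\<forall>x y. E x y \<longrightarrow> x \<in> V \<and> y \<in> V)
     \<and> (\<forall>x y. E x y \<longrightarrow> E y x) \<and> (\<forall>x. \<not> E x x)"

definition dominating_set :: "'a set \<Rightarrow> ('a \<Rightarrow> 'a \<Rightarrow> bool) \<Rightarrow> 'a set \<Rightarrow> bool" where
  "dominating_set V E S \<longleftrightarrow> S \<subseteq> V \<and> (\<forall>v \<in> V - S. \<exists>u \<in> S. E v u)"

definition domination_number :: "'a set \<Rightarrow> ('a \<Rightarrow> 'a \<Rightarrow> bool) \<Rightarrow> nat" where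
  "domination_number V E = Min (card ` {S. dominating_set V E S})"

definition Dk_verts :: "'a set \<Rightarrow> ('a \<Rightarrow> 'a \<Rightarrow> bool) \<Rightarrow> nat \<Rightarrow> 'a set set" where
  "Dk_verts V E k = {S. dominating_set V E S \<and> card S \<le> k}"

definition Dk_adj :: "'a set \<Rightarrow> 'a set \<Rightarrow> bool" where
  "Dk_adj A B \<longleftrightarrow> (\<exists>v. (A - B) \<union> (B - A) = {v})"

definition Xk_verts :: "'a set \<Rightarrow> ('a \<Rightarrow> 'a \<Rightarrow> bool) \<Rightarrow> nat \<Rightarrow> 'a set set" where
  "Xk_verts V E k = {S. dominating_set V E S \<and> card S = k}"

definition Xk_adj :: "'a set \<Rightarrow> 'a set \<Rightarrow> bool" where
  "Xk_adj S T \<longleftrightarrow> S \<noteq> T \<and> (\<exists>s \<in> S. \<exists>t \<in> T. T = (S - {s}) \<union> {t})"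

definition joined_by_path :: "'b set \<Rightarrow> ('b \<Rightarrow> 'b \<Rightarrow> bool) \<Rightarrow> 'b \<Rightarrow> 'b \<Rightarrow> bool" where
  "joined_by_path Vs Adj x y \<longleftrightarrow> x \<in> Vs \<and> y \<in> Vs \<and>
     (x, y) \<in> {(a, b). a \<in> Vs \<and> b \<in> Vs \<and> Adj a b}\<^sup>*"

end

theory Submission
  imports Defs
begin

lemma adjI1: "t \<notin> S \<Longrightarrow> Dk_adj S (insert t S)"
  unfolding Dk_adj_def by (rule exI[of _ t], rule set_eqI) auto
lemma adjI2: "t \<notin> S \<Longrightarrow> s \<in> S \<Longrightarrow> t \<noteq> s \<Longrightarrow> Dk_adj (insert t S) ((S - {s}) \<union> {t})"
  unfolding Dk_adj_def by (rule exI[of _ s], rule set_eqI) auto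
lemma dk_adj_cases:
  assumes "Dk_adj D D'"
  obtains v where "v \<notin> D" "D' = insert v D" | v where "v \<in> D" "D' = D - {v}"
proof -
  from assms obtain v where v: "(D - D') \<union> (D' - D) = {v}" unfolding Dk_adj_def by blast
  have e: "x \<in> (D - D') \<union> (D' - D) \<longleftrightarrow> x = v" for x using v by simp
  show ?thesis
  proof (cases "v \<in> D")
    case True
    have "D' = D - {v}"
    proof (intro set_eqI iffI)
      fix x
      { assume "x \<in> D'" then show "x \<in> D - {v}" using e[of x] e[of v] True by blast }
      { assume "x \<in> D - {v}" then show "x \<in> D'" using e[of x] by blast }
    qed
    show ?thesis by (rule that(2)[OF True \<open>D' = D - {v}\<close>])
  next
    case False
    have "D' = insert v D"
    proof (intro set_eqI iffI)
      fix x
      { assume "x \<in> D'" then show "x \<in> insert v D" using e[of x] by blast }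
      { assume "x \<in> insert v D" then show "x \<in> D'" using e[of x] e[of v] False by blast }
    qed
    show ?thesis by (rule that(1)[OF False \<open>D' = insert v D\<close>])
  qed
qed

theorem lemma11:
  fixes V :: "'a set" and E :: "'a \<Rightarrow> 'a \<Rightarrow> bool" and k :: nat and A B :: "'a set"
  assumes "simple_graph V E"
    and "k \<ge> domination_number V E"
    and "dominating_set V E A" and "dominating_set V E B"
    and "card A = k" and "card B = k"
  shows "joined_by_path (Dk_verts V E (k + 1)) Dk_adj A B \<longleftrightarrow>
         joined_by_path (Xk_verts V E k) Xk_adj A B"
proof -
  have finV: "finite V" using assms(1) unfolding simple_graph_def by blast
  have fin: "finite S" if "dominating_set V E S" for S
    using that finV unfolding dominating_set_def by (meson rev_finite_subset)
  have domsup: "dominating_set V E T" if "dominating_set V E S" "S \<subseteq> T" "T \<subseteq> V" for S T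
    using that unfolding dominating_set_def by blast
  define XR where "XR = {(a, b). a \<in> Xk_verts V E k \<and> b \<in> Xk_verts V E k \<and> Xk_adj a b}"
  define DR where "DR = {(a, b). a \<in> Dk_verts V E (k+1) \<and> b \<in> Dk_verts V E (k+1) \<and> Dk_adj a b}"
  have AX: "A \<in> Xk_verts V E k" "B \<in> Xk_verts V E k" using assms unfolding Xk_verts_def by auto
  have AD: "A \<in> Dk_verts V E (k+1)" "B \<in> Dk_verts V E (k+1)" using assms unfolding Dk_verts_def by auto
  show ?thesis
  proof
    assume "joined_by_path (Dk_verts V E (k + 1)) Dk_adj A B"
    then have p: "(A, B) \<in> DR\<^sup>*" unfolding joined_by_path_def DR_def by blast
    define P where "P D \<longleftrightarrow> (\<forall>T. dominating_set V E T \<and> card T = k \<and> (T \<subseteq> D \<or> D \<subseteq> T)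
        \<longrightarrow> (A, T) \<in> XR\<^sup>*)" for D
    have xstep: "(A, T2) \<in> XR\<^sup>*" if "(A, T1) \<in> XR\<^sup>*" "T1 \<in> Xk_verts V E k" "T2 \<in> Xk_verts V E k"
      "Xk_adj T1 T2" for T1 T2
      by (rule rtrancl_into_rtrancl[OF that(1)]) (simp add: XR_def that)
    have "P B" using p
    proof (induction rule: rtrancl_induct)
      case base
      show ?case unfolding P_def
      proof (intro allI impI)
        fix T assume T: "dominating_set V E T \<and> card T = k \<and> (T \<subseteq> A \<or> A \<subseteq> T)"
        then have "T = A" using fin assms(3,5) by (metis card_subset_eq)
        then show "(A, T) \<in> XR\<^sup>*" by simp
      qed
    next
      case (step D D')
      have DD: "D \<in> Dk_verts V E (k+1)" "D' \<in> Dk_verts V E (k+1)" "Dk_adj D D'"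
        using step.hyps(2) unfolding DR_def by auto
      have domD: "dominating_set V E D" "card D \<le> k+1" and domD': "dominating_set V E D'" "card D' \<le> k+1"
        using DD unfolding Dk_verts_def by auto
      have finD: "finite D" "finite D'" using fin domD domD' by auto
      have DV: "D \<subseteq> V" "D' \<subseteq> V" using domD domD' unfolding dominating_set_def by auto
      show ?case unfolding P_def
      proof (intro allI impI)
        fix T assume T: "dominating_set V E T \<and> card T = k \<and> (T \<subseteq> D' \<or> D' \<subseteq> T)"
        have finT: "finite T" using T fin by blast
        have TV: "T \<subseteq> V" using T unfolding dominating_set_def by auto
        have TX: "T \<in> Xk_verts V E k" using T unfolding Xk_verts_def by auto
        from DD(3) show "(A, T) \<in> XR\<^sup>*"
        proof (cases rule: dk_adj_cases)
          case (1 v)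
          show ?thesis
          proof (cases "D' \<subseteq> T")
            case True
            then show ?thesis using step.IH T 1 unfolding P_def by blast
          next
            case False
            then have TD': "T \<subseteq> D'" using T by blast
            show ?thesis
            proof (cases "v \<in> T")
              case False
              then have "T \<subseteq> D" using TD' 1 by blast
              then show ?thesis using step.IH T unfolding P_def by blast
            next
              case vT: True
              have cD': "card D' = card D + 1" using 1 finD by simp
              show ?thesis
              proof (cases "card D < k")
                case True
                then have "card D' \<le> k" using cD' by simp
                then have "T = D'" using TD' T finD by (metis card_mono card_seteq)
                then have "D \<subseteq> T" using 1 by blast
                then show ?thesis using step.IH T unfolding P_def by blast
              next
                case False
                then have cD: "card D = k" using cD' domD' by simp
                have RD: "(A, D) \<in> XR\<^sup>*" using step.IH domD cD unfolding P_def by blast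
                show ?thesis
                proof (cases "T = D")
                  case True then show ?thesis using RD by simp
                next
                  case False
                  have "T - {v} \<subseteq> D" using TD' 1 by blast
                  have cTv: "card (T - {v}) = k - 1" using vT T finT by simp
                  have "card T > 0" using vT finT card_gt_0_iff by blast
                  then have kpos: "k \<ge> 1" using T by simp
                  have "D - (T - {v}) \<noteq> {}"
                  proof
                    assume "D - (T - {v}) = {}"
                    then have "D \<subseteq> T - {v}" by blast
                    then have "card D \<le> k - 1" using cTv finT by (metis card_mono finite_Diff)
                    then show False using cD kpos by simp
                  qed
                  then obtain u where u: "u \<in> D" "u \<notin> T - {v}" by blast
                  have uT: "u \<notin> T" using u 1 by auto
                  have "card (D - {u}) = k - 1" using u cD finD by simp
                  have "T - {v} \<subseteq> D - {u}" using \<open>T - {v} \<subseteq> D\<close> u by blast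
                  then have eq1: "T - {v} = D - {u}"
                    using cTv \<open>card (D - {u}) = k - 1\<close> finD by (metis card_subset_eq finite_Diff)
                  have "T = (D - {u}) \<union> {v}" using eq1 vT by blast
                  moreover have "D \<noteq> T" using False by simp
                  ultimately have "Xk_adj D T" unfolding Xk_adj_def using u vT by blast
                  moreover have "D \<in> Xk_verts V E k" using domD cD unfolding Xk_verts_def by auto
                  ultimately show ?thesis using xstep[OF RD _ TX] by blast
                qed
              qed
            qed
          qed
        next
          case (2 v)
          show ?thesis
          proof (cases "T \<subseteq> D'")
            case True
            then show ?thesis using step.IH T 2 unfolding P_def by blast
          next
            case False
            then have TD': "D' \<subseteq> T" using T by blast
            show ?thesis
            proof (cases "v \<in> T")
              case True
              then have "D \<subseteq> T" using TD' 2 by blast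
              then show ?thesis using step.IH T unfolding P_def by blast
            next
              case vT: False
              have cD': "card D' = card D - 1" using 2 finD by simp
              show ?thesis
              proof (cases "card D = k + 1")
                case True
                then have "card D' = k" using cD' by simp
                then have "T = D'" using TD' T finT by (metis card_subset_eq)
                then have "T \<subseteq> D" using 2 by blast
                then show ?thesis using step.IH T unfolding P_def by blast
              next
                case False
                then have "card D \<le> k" using domD by simp
                moreover have "card D > 0" using 2 finD card_gt_0_iff by blast
                ultimately have cD'k: "card D' < k" using cD' by simp
                have "T - D' \<noteq> {}"
                proof
                  assume "T - D' = {}"
                  then have "T \<subseteq> D'" by blast
                  then have "card T \<le> card D'" using finD(2) card_mono by blast
                  then show False using cD'k T by simp
                qed
                then obtain w where w: "w \<in> T" "w \<notin> D'" by blast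
                have wD: "w \<notin> D" using w 2 vT by blast
                define T' where "T' = insert v (T - {w})"
                have vV: "v \<in> V" using 2 DV by blast
                have DT': "D \<subseteq> T'" using TD' 2 w unfolding T'_def by blast
                have T'V: "T' \<subseteq> V" using TV vV unfolding T'_def by blast
                have c1: "card (T - {w}) = k - 1" using finT w T by simp
                have "card T > 0" using w finT card_gt_0_iff by blast
                then have "k \<ge> 1" using T by simp
                have "v \<notin> T - {w}" using vT by blast
                then have "card T' = Suc (card (T - {w}))" unfolding T'_def using finT by simp
                then have cT': "card T' = k" using c1 \<open>k \<ge> 1\<close> by simp
                have domT': "dominating_set V E T'" using domsup[OF domD(1) DT' T'V] .
                have RT': "(A, T') \<in> XR\<^sup>*" using step.IH domT' cT' DT' unfolding P_def by blast
                have T'X: "T' \<in> Xk_verts V E k" using domT' cT' unfolding Xk_verts_def by auto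
                have "T = (T' - {v}) \<union> {w}" using w vT unfolding T'_def by blast
                moreover have "T' \<noteq> T" using vT unfolding T'_def by blast
                moreover have "v \<in> T'" unfolding T'_def by blast
                ultimately have "Xk_adj T' T" unfolding Xk_adj_def using w by blast
                then show ?thesis using xstep[OF RT' T'X TX] by blast
              qed
            qed
          qed
        qed
      qed
    qed
    then have "(A, B) \<in> XR\<^sup>*" using assms(4,6) unfolding P_def by blast
    then show "joined_by_path (Xk_verts V E k) Xk_adj A B"
      unfolding joined_by_path_def XR_def using AX by blast
  next
    assume "joined_by_path (Xk_verts V E k) Xk_adj A B"
    then have p: "(A, B) \<in> XR\<^sup>*" unfolding joined_by_path_def XR_def by blast
    have sub: "(S, T) \<in> DR\<^sup>*" if "(S, T) \<in> XR" for S T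
    proof -
      have S: "dominating_set V E S" "card S = k" and T: "dominating_set V E T" "card T = k"
        and adj: "Xk_adj S T" using that unfolding XR_def Xk_verts_def by auto
      obtain s t where st: "s \<in> S" "t \<in> T" "T = (S - {s}) \<union> {t}" "S \<noteq> T"
        using adj unfolding Xk_adj_def by blast
      have finS: "finite S" using fin S by blast
      have tS: "t \<notin> S"
      proof
        assume "t \<in> S"
        show False
        proof (cases "t = s")
          case True then show False using st by blast
        next
          case False
          then have "T = S - {s}" using st \<open>t \<in> S\<close> by blast
          then show False using S T st finS by (metis card_Diff1_less nat_less_le)
        qed
      qed
      define U where "U = insert t S"
      have UV: "U \<subseteq> V" using st T S unfolding U_def dominating_set_def by blast
      have domU: "dominating_set V E U" using domsup[OF S(1) _ UV] unfolding U_def by blast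
      have cU: "card U = k + 1" using tS finS S unfolding U_def by simp
      have UD: "U \<in> Dk_verts V E (k+1)" using domU cU unfolding Dk_verts_def by auto
      have SD: "S \<in> Dk_verts V E (k+1)" "T \<in> Dk_verts V E (k+1)" using S T unfolding Dk_verts_def by auto
      have a1: "Dk_adj S U" unfolding U_def using tS by (rule adjI1)
      have ts: "t \<noteq> s" using tS st by blast
      have a2: "Dk_adj U T" unfolding U_def using adjI2[OF tS st(1) ts] st(3) by simp
      have "(S, U) \<in> DR" "(U, T) \<in> DR" using a1 a2 UD SD unfolding DR_def by auto
      then show ?thesis by simp
    qed
    have "(A, B) \<in> DR\<^sup>*" using p
    proof (induction rule: rtrancl_induct)
      case base then show ?case by simp
    next
      case (step y z) then show ?case using sub by (meson rtrancl_trans)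
    qed
    then show "joined_by_path (Dk_verts V E (k + 1)) Dk_adj A B"
      unfolding joined_by_path_def DR_def using AD by blast
  qed
qed

end
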